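(* Fix one of the moves $F1$, $F2$ and one of the moves $F3$, $F4$. Let $D$ be the Gauss diagram of an arbitrary twisted knot diagram. Then there is a finite sequence of moves of types $R1$, $R2$, $R3$, $T2$, $T3$, together with the forbidden moves $T4$, the chosen one of $F1$/$F2$, and the chosen one of $F3$/$F4$, which transforms $D$ into either the Gauss diagram of the trivial knot (a circle with no chords and no bars) or the Gauss diagram of the trivial knot with a bar (a circle with no chords and exactly one bar).
   Context: A twisted knot diagram is a virtual knot diagram (an oriented generic immersed circle in the plane whose double points are either classical crossings, carrying over/under information, or virtual crossings, carrying none) which may in addition carry finitely many bars: short segments marked transversally on arcs, away from crossings. Twisted knots are equivalence classes of such diagrams under the classical Reidemeister moves $R1,R2,R3$, the virtual Reidemeister moves $V1$–$V4$, and the twisted Reidemeister moves $T1$ (a bar slides through a virtual crossing), $T2$ (two consecutive bars on an arc cancel), $T3$ (a classical crossing having a bar on each of its four incident arcs next to the crossing is replaced by the crossing with over- and under-strand exchanged, the four bars being removed). Gauss diagram of a twisted knot diagram: an oriented circle (the parametrizing circle of the knot) on which are marked, in the order met when traversing the knot from a basepoint, the two preimages of each classical crossing and one point for each bar. For each classical crossing a chord joins its two preimages, oriented from the overcrossing preimage (the arrowtail) to the undercrossing preimage (the arrowhead), and labelled by the sign $\varepsilon\in\{+,-\}$ of the crossing. Virtual crossings are not recorded. Two marked points (chord endpoints or bars) are called adjacent if no other marked point lies between them on the circle. Moves on Gauss diagrams (each may be applied in either direction): - $R1,R2,R3$: the standard Gauss-diagram versions of the classical Reidemeister moves, i.e.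 the changes of Gauss diagrams induced by classical Reidemeister moves on diagrams (e.g. $R1$ adds or removes a chord of any orientation and sign whose two endpoints are adjacent). - $T2$: add or remove two adjacent bars. - $T3$: if each endpoint of a chord is immediately preceded and immediately followed by a bar, remove these four bars, reverse the orientation of the chord and change its sign (the Gauss-diagram version of the move $T3$ above). Virtual moves and $T1$ do not change the Gauss diagram. Forbidden moves: - $T4$: add or remove a chord (of any orientation and sign) whose two endpoints are separated by exactly one bar and no other marked point (a curl with a bar). - $F1$: exchange the positions of two adjacent arrowheads of different chords (signs arbitrary). - $F2$: exchange the positions of two adjacent arrowtails of different chords (signs arbitrary). - $F3$: if two arrowheads of different chords are separated by exactly one bar and no other marked point, exchange their positions (the bar stays between them). - $F4$: the same as $F3$ for two arrowtails. *)

theory Defs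
  imports Main
begin

text \<open>A Gauss diagram is encoded as the list of
marked points met when traversing the parametrizing circle from a basepoint.  A marked point
is a bar, the arrowtail (overcrossing preimage) of the chord with label a and sign s, or the
arrowhead (undercrossing preimage) of that chord.  Signs: True = +, False = -.
Changing the basepoint (rotating the list) does not change the diagram; it is allowed as a
step below.\<close>

datatype mark = Bar | Tl nat bool | Hd nat bool

fun lab :: "mark \<Rightarrow> nat option" where
  "lab Bar = None"
| "lab (Tl a s) = Some a"
| "lab (Hd a s) = Some a"

definition wf_gauss :: "mark list \<Rightarrow> bool" where
  "wf_gauss D \<longleftrightarrow> (\<forall>a. filter (\<lambda>m. lab m = Some a) D = [] \<or>
      (\<exists>s. filter (\<lambda>m. lab m = Some a) D \<in> {[Tl a s, Hd a s], [Hd a s, Tl a s]}))"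

definition chord_ends :: "nat \<Rightarrow> bool \<Rightarrow> mark \<Rightarrow> mark \<Rightarrow> bool" where
  "chord_ends a s e1 e2 \<longleftrightarrow> (e1 = Tl a s \<and> e2 = Hd a s) \<or> (e1 = Hd a s \<and> e2 = Tl a s)"

fun flip :: "mark \<Rightarrow> mark" where
  "flip Bar = Bar"
| "flip (Tl a s) = Hd a (\<not> s)"
| "flip (Hd a s) = Tl a (\<not> s)"

text \<open>R3 local data: chord a from the top strand to the middle strand, chord b from the top
strand to the bottom strand, chord c from the middle strand to the bottom strand, with signs
ea eb ec.  u1: on the top strand the tail of a precedes the tail of b; u2: on the middle strand
the head of a precedes the tail of c; u3: on the bottom strand the head of b precedes the head
of c.  The configuration is realizable iff (u1 = u2) = (eb = ec) and (u2 = u3) = (ea = eb);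
the move reverses the order within each of the three pairs.\<close>

definition r3_top :: "nat \<Rightarrow> bool \<Rightarrow> nat \<Rightarrow> bool \<Rightarrow> bool \<Rightarrow> mark list" where
  "r3_top a ea b eb u = (if u then [Tl a ea, Tl b eb] else [Tl b eb, Tl a ea])"

definition r3_mid :: "nat \<Rightarrow> bool \<Rightarrow> nat \<Rightarrow> bool \<Rightarrow> bool \<Rightarrow> mark list" where
  "r3_mid a ea c ec u = (if u then [Hd a ea, Tl c ec] else [Tl c ec, Hd a ea])"

definition r3_bot :: "nat \<Rightarrow> bool \<Rightarrow> nat \<Rightarrow> bool \<Rightarrow> bool \<Rightarrow> mark list" where
  "r3_bot b eb c ec u = (if u then [Hd b eb, Hd c ec] else [Hd c ec, Hd b eb])"

text \<open>One-directional local moves; the arguments f1 and f3 record the choice of forbidden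
moves: f1 = True means F1 (else F2), f3 = True means F3 (else F4).  Moves are applied in
either direction via the symmetric closure in gstep.\<close>

inductive basic_move :: "bool \<Rightarrow> bool \<Rightarrow> mark list \<Rightarrow> mark list \<Rightarrow> bool" for f1 f3 where
  R1: "chord_ends a s e1 e2 \<Longrightarrow> basic_move f1 f3 (X @ Y) (X @ [e1, e2] @ Y)"
| R2: "H \<in> {[Hd a s, Hd b (\<not> s)], [Hd b (\<not> s), Hd a s]} \<Longrightarrow>
       basic_move f1 f3 (X @ Y @ Z) (X @ [Tl a s, Tl b (\<not> s)] @ Y @ H @ Z)"
| R2': "H \<in> {[Hd a s, Hd b (\<not> s)], [Hd b (\<not> s), Hd a s]} \<Longrightarrow>
       basic_move f1 f3 (X @ Y @ Z) (X @ H @ Y @ [Tl a s, Tl b (\<not> s)] @ Z)"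
| R3: "(u1 = u2) = (eb = ec) \<Longrightarrow> (u2 = u3) = (ea = eb) \<Longrightarrow>
       basic_move f1 f3
         (X @ r3_top a ea b eb u1 @ Y @ r3_mid a ea c ec u2 @ Z @ r3_bot b eb c ec u3 @ W)
         (X @ r3_top a ea b eb (\<not> u1) @ Y @ r3_mid a ea c ec (\<not> u2) @ Z @ r3_bot b eb c ec (\<not> u3) @ W)"
| R3': "(u1 = u2) = (eb = ec) \<Longrightarrow> (u2 = u3) = (ea = eb) \<Longrightarrow>
       basic_move f1 f3
         (X @ r3_top a ea b eb u1 @ Y @ r3_bot b eb c ec u3 @ Z @ r3_mid a ea c ec u2 @ W)
         (X @ r3_top a ea b eb (\<not> u1) @ Y @ r3_bot b eb c ec (\<not> u3) @ Z @ r3_mid a ea c ec (\<not> u2) @ W)"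
| T2: "basic_move f1 f3 (X @ Y) (X @ [Bar, Bar] @ Y)"
| T3: "chord_ends a s e1 e2 \<Longrightarrow>
       basic_move f1 f3 (X @ [Bar, e1, Bar] @ Y @ [Bar, e2, Bar] @ Z)
                         (X @ [flip e1] @ Y @ [flip e2] @ Z)"
| T4: "chord_ends a s e1 e2 \<Longrightarrow> basic_move f1 f3 (X @ [Bar] @ Y) (X @ [e1, Bar, e2] @ Y)"
| F1: "f1 \<Longrightarrow> basic_move f1 f3 (X @ [Hd a s, Hd b t] @ Y) (X @ [Hd b t, Hd a s] @ Y)"
| F2: "\<not> f1 \<Longrightarrow> basic_move f1 f3 (X @ [Tl a s, Tl b t] @ Y) (X @ [Tl b t, Tl a s] @ Y)"
| F3: "f3 \<Longrightarrow> basic_move f1 f3 (X @ [Hd a s, Bar, Hd b t] @ Y) (X @ [Hd b t, Bar, Hd a s] @ Y)"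
| F4: "\<not> f3 \<Longrightarrow> basic_move f1 f3 (X @ [Tl a s, Bar, Tl b t] @ Y) (X @ [Tl b t, Bar, Tl a s] @ Y)"

text \<open>A step between Gauss diagrams: a change of basepoint, or one of the moves in either
direction.  Both diagrams are required to be well-formed (this forces freshly added chords to
carry new labels).\<close>

definition gstep :: "bool \<Rightarrow> bool \<Rightarrow> mark list \<Rightarrow> mark list \<Rightarrow> bool" where
  "gstep f1 f3 D D' \<longleftrightarrow> wf_gauss D \<and> wf_gauss D' \<and>
     (D' = rotate1 D \<or> basic_move f1 f3 D D' \<or> basic_move f1 f3 D' D)"

end

theory Submission imports Defs "HOL-Library.Multiset" begin

abbreviation EQ where "EQ f1 f3 \<equiv> (gstep f1 f3)\<^sup>*\<^sup>*"

definition nb :: "mark list \<Rightarrow> nat" where "nb D = length (filter (\<lambda>m. m \<noteq> Bar) D)"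

lemma mset_two: "mset xs = {#u, v#} \<Longrightarrow> xs = [u,v] \<or> xs = [v,u]"
proof -
  assume h: "mset xs = {#u, v#}"
  then have "length xs = 2" by (metis size_mset size_add_mset size_empty numeral_2_eq_2 One_nat_def)
  then obtain x y where xs: "xs = [x,y]" by (auto simp: length_Suc_conv numeral_2_eq_2)
  with h have "{#x,y#} = {#u, v#}" by simp
  then have "(x = u \<and> y = v) \<or> (x = v \<and> y = u)" by (metis add_eq_conv_ex add_mset_eq_single)
  then show ?thesis using xs by auto
qed

lemma wf_nb:
  assumes "mset (filter (\<lambda>m. m \<noteq> Bar) D') = mset (filter (\<lambda>m. m \<noteq> Bar) D)" "wf_gauss D"
  shows "wf_gauss D'"
  unfolding wf_gauss_def
proof
  fix a
  have e: "\<And>E. filter (\<lambda>m. lab m = Some a) E = filter (\<lambda>m. lab m = Some a) (filter (\<lambda>m. m \<noteq> Bar) E)"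
    by (simp add: filter_filter) (metis (mono_tags) lab.simps(1) option.distinct(1))
  have me: "mset (filter (\<lambda>m. lab m = Some a) D') = mset (filter (\<lambda>m. lab m = Some a) D)"
    by (subst e, subst (2) e, metis assms(1) mset_filter)
  from assms(2) have "filter (\<lambda>m. lab m = Some a) D = [] \<or>
      (\<exists>s. filter (\<lambda>m. lab m = Some a) D \<in> {[Tl a s, Hd a s], [Hd a s, Tl a s]})"
    unfolding wf_gauss_def by blast
  then show "filter (\<lambda>m. lab m = Some a) D' = [] \<or>
      (\<exists>s. filter (\<lambda>m. lab m = Some a) D' \<in> {[Tl a s, Hd a s], [Hd a s, Tl a s]})"
  proof
    assume "filter (\<lambda>m. lab m = Some a) D = []" then show ?thesis using me by simp
  next
    assume "\<exists>s. filter (\<lambda>m. lab m = Some a) D \<in> {[Tl a s, Hd a s], [Hd a s, Tl a s]}"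
    then obtain s where "filter (\<lambda>m. lab m = Some a) D \<in> {[Tl a s, Hd a s], [Hd a s, Tl a s]}" by blast
    then have "mset (filter (\<lambda>m. lab m = Some a) D) = {#Tl a s, Hd a s#}"
      by (auto simp del: mset_filter simp: add_mset_commute)
    then have "mset (filter (\<lambda>m. lab m = Some a) D') = {#Tl a s, Hd a s#}" using me by simp
    from mset_two[OF this] show ?thesis by auto
  qed
qed

lemma wf_len: "wf_gauss D \<Longrightarrow> length (filter (\<lambda>m. lab m = Some a) D) \<le> 2"
  unfolding wf_gauss_def by (erule allE[of _ a]) auto

lemma wf_rem: "wf_gauss D \<Longrightarrow> wf_gauss (filter (\<lambda>m. lab m \<noteq> Some a) D)"
  unfolding wf_gauss_def filter_filter
proof
  fix b assume h: "\<forall>a. filter (\<lambda>m. lab m = Some a) D = [] \<or>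
          (\<exists>s. filter (\<lambda>m. lab m = Some a) D \<in> {[Tl a s, Hd a s], [Hd a s, Tl a s]})"
  show "filter (\<lambda>x. lab x \<noteq> Some a \<and> lab x = Some b) D = [] \<or>
         (\<exists>s. filter (\<lambda>x. lab x \<noteq> Some a \<and> lab x = Some b) D \<in> {[Tl b s, Hd b s], [Hd b s, Tl b s]})"
  proof (cases "a = b")
    case True then show ?thesis by simp
  next
    case False
    then have "filter (\<lambda>x. lab x \<noteq> Some a \<and> lab x = Some b) D = filter (\<lambda>x. lab x = Some b) D"
      by (intro filter_cong) auto
    then show ?thesis using h by simp
  qed
qed

lemma gstep_sym_basic: "basic_move f1 f3 A B \<Longrightarrow> wf_gauss A \<Longrightarrow> wf_gauss B \<Longrightarrow> EQ f1 f3 A B \<and> EQ f1 f3 B A"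
  unfolding gstep_def by auto

lemma mset_rotate1: "mset (rotate1 xs) = mset xs" by (cases xs) auto
lemma mset_rotate: "mset (rotate n xs) = mset xs" by (induction n) (auto simp: mset_rotate1)

lemma EQ_rot: "wf_gauss D \<Longrightarrow> EQ f1 f3 D (rotate n D)"
proof (induction n)
  case 0 then show ?case by simp
next
  case (Suc n)
  have w: "wf_gauss (rotate n D)" by (rule wf_nb[OF _ Suc.prems]) (simp add: mset_filter mset_rotate mset_rotate1)
  have w2: "wf_gauss (rotate1 (rotate n D))" by (rule wf_nb[OF _ Suc.prems]) (simp add: mset_filter mset_rotate mset_rotate1)
  have "gstep f1 f3 (rotate n D) (rotate1 (rotate n D))" unfolding gstep_def using w w2 by simp
  then show ?case using Suc by (simp add: rotate_Suc)
qed

lemma gstep_rev: "gstep f1 f3 A B \<Longrightarrow> EQ f1 f3 B A"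
proof -
  assume g: "gstep f1 f3 A B"
  show ?thesis
  proof (cases "B = rotate1 A")
    case True
    have wB: "wf_gauss B" using g unfolding gstep_def by simp
    show ?thesis
    proof (cases "A = []")
      case True then show ?thesis using \<open>B = rotate1 A\<close> by simp
    next
      case False
      have "rotate (length A - 1) B = rotate (length A - 1) (rotate 1 A)"
        using True by simp
      also have "\<dots> = rotate (length A - 1 + 1) A" by (rule rotate_rotate)
      also have "\<dots> = A" using False by (simp add: rotate_id)
      finally show ?thesis using EQ_rot[OF wB, of f1 f3 "length A - 1"] by simp
    qed
  next
    case False then show ?thesis using g unfolding gstep_def by auto
  qed
qed

lemma EQ_sym: "EQ f1 f3 A B \<Longrightarrow> EQ f1 f3 B A"
proof (induction rule: rtranclp_induct)
  case base then show ?case by simp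
next
  case (step y z) then show ?case using gstep_rev by (metis rtranclp_trans)
qed

lemma EQ_wf: "EQ f1 f3 A B \<Longrightarrow> wf_gauss A \<Longrightarrow> wf_gauss B"
  by (induction rule: rtranclp_induct) (auto simp: gstep_def)

lemma T2ins: "wf_gauss (X @ Y) \<Longrightarrow> EQ f1 f3 (X @ Y) (X @ [Bar, Bar] @ Y) \<and> EQ f1 f3 (X @ [Bar, Bar] @ Y) (X @ Y)"
proof -
  assume w: "wf_gauss (X @ Y)"
  have w2: "wf_gauss (X @ [Bar, Bar] @ Y)" by (rule wf_nb[OF _ w]) simp
  show ?thesis by (rule gstep_sym_basic[OF basic_move.T2 w w2])
qed

fun fc :: "nat \<Rightarrow> mark list \<Rightarrow> mark list" where
  "fc a [] = []"
| "fc a (m # D) = (if lab m = Some a then [Bar, flip m, Bar] else [m]) @ fc a D"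

lemma fc_append[simp]: "fc a (X @ Y) = fc a X @ fc a Y" by (induction X) auto

lemma fc_id: "filter (\<lambda>m. lab m = Some a) X = [] \<Longrightarrow> fc a X = X"
  by (induction X) (auto split: if_splits)

lemma lab_flip[simp]: "lab (flip m) = lab m" by (cases m) auto

lemma filter_fc: "filter (\<lambda>m. lab m = Some b) (fc a D) =
   (if b = a then map flip (filter (\<lambda>m. lab m = Some b) D) else filter (\<lambda>m. lab m = Some b) D)"
  by (induction D) auto

lemma wf_fc: "wf_gauss D \<Longrightarrow> wf_gauss (fc a D)"
  unfolding wf_gauss_def
proof
  fix b assume h: "\<forall>a. filter (\<lambda>m. lab m = Some a) D = [] \<or>
          (\<exists>s. filter (\<lambda>m. lab m = Some a) D \<in> {[Tl a s, Hd a s], [Hd a s, Tl a s]})"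
  then have hb: "filter (\<lambda>m. lab m = Some b) D = [] \<or>
          (\<exists>s. filter (\<lambda>m. lab m = Some b) D \<in> {[Tl b s, Hd b s], [Hd b s, Tl b s]})" by blast
  show "filter (\<lambda>m. lab m = Some b) (fc a D) = [] \<or>
          (\<exists>s. filter (\<lambda>m. lab m = Some b) (fc a D) \<in> {[Tl b s, Hd b s], [Hd b s, Tl b s]})"
  proof (cases "b = a")
    case True
    from hb show ?thesis unfolding filter_fc using True
      by (elim disjE exE) (auto intro: exI[of _ "\<not> _"])
  next
    case False then show ?thesis using hb unfolding filter_fc by simp
  qed
qed

lemma wf_split:
  assumes "wf_gauss D" "filter (\<lambda>m. lab m = Some a) D \<noteq> []"
  obtains s u v X Y Z where "chord_ends a s u v" "D = X @ [u] @ Y @ [v] @ Z"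
    "filter (\<lambda>m. lab m = Some a) X = []" "filter (\<lambda>m. lab m = Some a) Y = []"
    "filter (\<lambda>m. lab m = Some a) Z = []"
proof -
  from assms obtain s where "filter (\<lambda>m. lab m = Some a) D \<in> {[Tl a s, Hd a s], [Hd a s, Tl a s]}"
    unfolding wf_gauss_def by blast
  then obtain u v where cu: "chord_ends a s u v" and f: "filter (\<lambda>m. lab m = Some a) D = [u, v]"
    unfolding chord_ends_def by auto
  from f obtain X vs where 1: "D = X @ u # vs" "\<forall>x\<in>set X. \<not> lab x = Some a" "[v] = filter (\<lambda>m. lab m = Some a) vs"
    unfolding filter_eq_Cons_iff by blast
  from 1(3)[symmetric] obtain Y Z where 2: "vs = Y @ v # Z" "\<forall>x\<in>set Y. \<not> lab x = Some a" "[] = filter (\<lambda>m. lab m = Some a) Z"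
    unfolding filter_eq_Cons_iff by blast
  show ?thesis
    by (rule that[OF cu, of X Y Z]) (use 1 2 in \<open>auto simp: filter_empty_conv\<close>)
qed

lemma EQ_fc:
  assumes w: "wf_gauss D" and ne: "filter (\<lambda>m. lab m = Some a) D \<noteq> []"
  shows "EQ f1 f3 D (fc a D)"
proof -
  obtain s u v X Y Z where cu: "chord_ends a s u v" and D: "D = X @ [u] @ Y @ [v] @ Z"
    and fX: "filter (\<lambda>m. lab m = Some a) X = []" and fY: "filter (\<lambda>m. lab m = Some a) Y = []"
    and fZ: "filter (\<lambda>m. lab m = Some a) Z = []"
    using wf_split[OF w ne] by blast
  have lu: "lab u = Some a" "lab v = Some a" using cu unfolding chord_ends_def by auto
  have fcD: "fc a D = X @ [Bar, flip u, Bar] @ Y @ [Bar, flip v, Bar] @ Z"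
    using fX fY fZ lu by (simp add: D fc_id)
  define S1 where "S1 = X @ [Bar, Bar, u] @ Y @ [v] @ Z"
  define S2 where "S2 = X @ [Bar, Bar, u, Bar, Bar] @ Y @ [v] @ Z"
  define S3 where "S3 = X @ [Bar, Bar, u, Bar, Bar] @ Y @ [Bar, Bar, v] @ Z"
  define S4 where "S4 = X @ [Bar, Bar, u, Bar, Bar] @ Y @ [Bar, Bar, v, Bar, Bar] @ Z"
  have e1: "EQ f1 f3 D S1" using T2ins[of X "[u] @ Y @ [v] @ Z" f1 f3] w by (simp add: D S1_def)
  have w1: "wf_gauss S1" using EQ_wf[OF e1 w] .
  have e2: "EQ f1 f3 S1 S2" using T2ins[of "X @ [Bar, Bar, u]" "Y @ [v] @ Z" f1 f3] w1 by (simp add: S2_def S1_def)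
  have w2: "wf_gauss S2" using EQ_wf[OF e2 w1] .
  have e3: "EQ f1 f3 S2 S3" using T2ins[of "X @ [Bar, Bar, u, Bar, Bar] @ Y" "[v] @ Z" f1 f3] w2 by (simp add: S2_def S3_def)
  have w3: "wf_gauss S3" using EQ_wf[OF e3 w2] .
  have e4: "EQ f1 f3 S3 S4" using T2ins[of "X @ [Bar, Bar, u, Bar, Bar] @ Y @ [Bar, Bar, v]" "Z" f1 f3] w3 by (simp add: S4_def S3_def)
  have w4: "wf_gauss S4" using EQ_wf[OF e4 w3] .
  have wf: "wf_gauss (fc a D)" using wf_fc[OF w] .
  have bm: "basic_move f1 f3 S4 (fc a D)"
    using basic_move.T3[OF cu, of f1 f3 "X @ [Bar]" "[Bar] @ Y @ [Bar]" "[Bar] @ Z"]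
    by (simp add: S4_def fcD)
  have e5: "EQ f1 f3 S4 (fc a D)" using gstep_sym_basic[OF bm w4 wf] by blast
  show ?thesis using e1 e2 e3 e4 e5 by (meson rtranclp_trans)
qed

lemma EQ_fc_both: "wf_gauss D \<Longrightarrow> filter (\<lambda>m. lab m = Some a) D \<noteq> [] \<Longrightarrow>
   EQ f1 f3 D (fc a D) \<and> EQ f1 f3 (fc a D) D"
  using EQ_fc EQ_sym by blast

lemma EQ_fc2:
  assumes "wf_gauss D" "filter (\<lambda>m. lab m = Some a) D \<noteq> []" "filter (\<lambda>m. lab m = Some b) D \<noteq> []" "a \<noteq> b"
  shows "EQ f1 f3 D (fc b (fc a D)) \<and> EQ f1 f3 (fc b (fc a D)) D"
proof -
  have 1: "EQ f1 f3 D (fc a D) \<and> EQ f1 f3 (fc a D) D" using EQ_fc_both assms by blast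
  have 2: "EQ f1 f3 (fc a D) (fc b (fc a D)) \<and> EQ f1 f3 (fc b (fc a D)) (fc a D)"
    using EQ_fc_both[OF wf_fc[OF assms(1)]] assms(3,4) by (simp add: filter_fc)
  show ?thesis using 1 2 by (meson rtranclp_trans)
qed

lemma F1d:
  assumes w: "wf_gauss (X @ [Hd a s, Hd b t] @ Y)" and ab: "a \<noteq> b"
  shows "EQ f1 f3 (X @ [Hd a s, Hd b t] @ Y) (X @ [Hd b t, Hd a s] @ Y)"
proof -
  have w2: "wf_gauss (X @ [Hd b t, Hd a s] @ Y)" by (rule wf_nb[OF _ w]) (simp add: add_mset_commute)
  show ?thesis
  proof (cases f1)
    case True
    show ?thesis using gstep_sym_basic[OF basic_move.F1[OF True] w w2] by blast
  next
    case False
    define X' where "X' = fc b (fc a X)"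
    define Y' where "Y' = fc b (fc a Y)"
    have D1: "fc b (fc a (X @ [Hd a s, Hd b t] @ Y)) = X' @ [Bar, Tl a (\<not>s), Bar, Bar, Tl b (\<not>t), Bar] @ Y'"
      using ab by (simp add: X'_def Y'_def)
    have D2: "fc b (fc a (X @ [Hd b t, Hd a s] @ Y)) = X' @ [Bar, Tl b (\<not>t), Bar, Bar, Tl a (\<not>s), Bar] @ Y'"
      using ab by (simp add: X'_def Y'_def)
    have e1: "EQ f1 f3 (X @ [Hd a s, Hd b t] @ Y) (X' @ [Bar, Tl a (\<not>s), Bar, Bar, Tl b (\<not>t), Bar] @ Y')"
      using EQ_fc2[OF w _ _ ab] D1 by auto
    have wD1: "wf_gauss (X' @ [Bar, Tl a (\<not>s), Bar, Bar, Tl b (\<not>t), Bar] @ Y')"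
      using EQ_wf[OF e1 w] .
    have wS1: "wf_gauss (X' @ [Bar, Tl a (\<not>s), Tl b (\<not>t), Bar] @ Y')" by (rule wf_nb[OF _ wD1]) simp
    have e2: "EQ f1 f3 (X' @ [Bar, Tl a (\<not>s), Bar, Bar, Tl b (\<not>t), Bar] @ Y') (X' @ [Bar, Tl a (\<not>s), Tl b (\<not>t), Bar] @ Y')"
      using T2ins[of "X' @ [Bar, Tl a (\<not>s)]" "[Tl b (\<not>t), Bar] @ Y'" f1 f3] wS1 by simp
    have wS2: "wf_gauss (X' @ [Bar, Tl b (\<not>t), Tl a (\<not>s), Bar] @ Y')" by (rule wf_nb[OF _ wS1]) (simp add: add_mset_commute)
    have bm: "basic_move f1 f3 (X' @ [Bar, Tl a (\<not>s), Tl b (\<not>t), Bar] @ Y') (X' @ [Bar, Tl b (\<not>t), Tl a (\<not>s), Bar] @ Y')"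
      using basic_move.F2[of f1 f3 "X' @ [Bar]" a "\<not>s" b "\<not>t" "Bar # Y'", OF False] by simp
    have e3: "EQ f1 f3 (X' @ [Bar, Tl a (\<not>s), Tl b (\<not>t), Bar] @ Y') (X' @ [Bar, Tl b (\<not>t), Tl a (\<not>s), Bar] @ Y')"
      using gstep_sym_basic[OF bm wS1 wS2] by blast
    have e4: "EQ f1 f3 (X' @ [Bar, Tl b (\<not>t), Tl a (\<not>s), Bar] @ Y') (X' @ [Bar, Tl b (\<not>t), Bar, Bar, Tl a (\<not>s), Bar] @ Y')"
      using T2ins[of "X' @ [Bar, Tl b (\<not>t)]" "[Tl a (\<not>s), Bar] @ Y'" f1 f3] wS2 by simp
    have e5: "EQ f1 f3 (X' @ [Bar, Tl b (\<not>t), Bar, Bar, Tl a (\<not>s), Bar] @ Y') (X @ [Hd b t, Hd a s] @ Y)"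
      using EQ_fc2[OF w2 _ _ ab] D2 by auto
    show ?thesis using e1 e2 e3 e4 e5 by (meson rtranclp_trans)
  qed
qed

lemma F3d:
  assumes w: "wf_gauss (X @ [Hd a s, Bar, Hd b t] @ Y)" and ab: "a \<noteq> b"
  shows "EQ f1 f3 (X @ [Hd a s, Bar, Hd b t] @ Y) (X @ [Hd b t, Bar, Hd a s] @ Y)"
proof -
  have w2: "wf_gauss (X @ [Hd b t, Bar, Hd a s] @ Y)" by (rule wf_nb[OF _ w]) (simp add: add_mset_commute)
  show ?thesis
  proof (cases f3)
    case True
    show ?thesis using gstep_sym_basic[OF basic_move.F3[OF True] w w2] by blast
  next
    case False
    define X' where "X' = fc b (fc a X)"
    define Y' where "Y' = fc b (fc a Y)"
    have D1: "fc b (fc a (X @ [Hd a s, Bar, Hd b t] @ Y)) = X' @ [Bar, Tl a (\<not>s), Bar, Bar, Bar, Tl b (\<not>t), Bar] @ Y'"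
      using ab by (simp add: X'_def Y'_def)
    have D2: "fc b (fc a (X @ [Hd b t, Bar, Hd a s] @ Y)) = X' @ [Bar, Tl b (\<not>t), Bar, Bar, Bar, Tl a (\<not>s), Bar] @ Y'"
      using ab by (simp add: X'_def Y'_def)
    have e1: "EQ f1 f3 (X @ [Hd a s, Bar, Hd b t] @ Y) (X' @ [Bar, Tl a (\<not>s), Bar, Bar, Bar, Tl b (\<not>t), Bar] @ Y')"
      using EQ_fc2[OF w _ _ ab] D1 by auto
    have wD1: "wf_gauss (X' @ [Bar, Tl a (\<not>s), Bar, Bar, Bar, Tl b (\<not>t), Bar] @ Y')"
      using EQ_wf[OF e1 w] .
    have wS1: "wf_gauss (X' @ [Bar, Tl a (\<not>s), Bar, Tl b (\<not>t), Bar] @ Y')" by (rule wf_nb[OF _ wD1]) simp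
    have e2: "EQ f1 f3 (X' @ [Bar, Tl a (\<not>s), Bar, Bar, Bar, Tl b (\<not>t), Bar] @ Y') (X' @ [Bar, Tl a (\<not>s), Bar, Tl b (\<not>t), Bar] @ Y')"
      using T2ins[of "X' @ [Bar, Tl a (\<not>s)]" "[Bar, Tl b (\<not>t), Bar] @ Y'" f1 f3] wS1 by simp
    have wS2: "wf_gauss (X' @ [Bar, Tl b (\<not>t), Bar, Tl a (\<not>s), Bar] @ Y')" by (rule wf_nb[OF _ wS1]) (simp add: add_mset_commute)
    have bm: "basic_move f1 f3 (X' @ [Bar, Tl a (\<not>s), Bar, Tl b (\<not>t), Bar] @ Y') (X' @ [Bar, Tl b (\<not>t), Bar, Tl a (\<not>s), Bar] @ Y')"
      using basic_move.F4[of f3 f1 "X' @ [Bar]" a "\<not>s" b "\<not>t" "Bar # Y'", OF False] by simp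
    have e3: "EQ f1 f3 (X' @ [Bar, Tl a (\<not>s), Bar, Tl b (\<not>t), Bar] @ Y') (X' @ [Bar, Tl b (\<not>t), Bar, Tl a (\<not>s), Bar] @ Y')"
      using gstep_sym_basic[OF bm wS1 wS2] by blast
    have e4: "EQ f1 f3 (X' @ [Bar, Tl b (\<not>t), Bar, Tl a (\<not>s), Bar] @ Y') (X' @ [Bar, Tl b (\<not>t), Bar, Bar, Bar, Tl a (\<not>s), Bar] @ Y')"
      using T2ins[of "X' @ [Bar, Tl b (\<not>t)]" "[Bar, Tl a (\<not>s), Bar] @ Y'" f1 f3] wS2 by simp
    have e5: "EQ f1 f3 (X' @ [Bar, Tl b (\<not>t), Bar, Bar, Bar, Tl a (\<not>s), Bar] @ Y') (X @ [Hd b t, Bar, Hd a s] @ Y)"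
      using EQ_fc2[OF w2 _ _ ab] D2 by auto
    show ?thesis using e1 e2 e3 e4 e5 by (meson rtranclp_trans)
  qed
qed

lemma HTd:
  assumes w: "wf_gauss (X @ [Hd a s, Tl c t] @ Y)" and ac: "a \<noteq> c"
  shows "EQ f1 f3 (X @ [Hd a s, Tl c t] @ Y) (X @ [Bar, Tl c t, Hd a s, Bar] @ Y)"
proof -
  have w2: "wf_gauss (X @ [Bar, Tl c t, Hd a s, Bar] @ Y)" by (rule wf_nb[OF _ w]) simp
  have D1: "fc c (X @ [Hd a s, Tl c t] @ Y) = fc c X @ [Hd a s, Bar, Hd c (\<not>t)] @ (Bar # fc c Y)"
    using ac by simp
  have D2: "fc c (X @ [Bar, Tl c t, Hd a s, Bar] @ Y) = fc c X @ [Bar, Bar, Hd c (\<not>t), Bar, Hd a s, Bar] @ fc c Y"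
    using ac by simp
  have e1: "EQ f1 f3 (X @ [Hd a s, Tl c t] @ Y) (fc c X @ [Hd a s, Bar, Hd c (\<not>t)] @ (Bar # fc c Y))"
    using EQ_fc_both[OF w, of c f1 f3] D1 by simp
  have wD1: "wf_gauss (fc c X @ [Hd a s, Bar, Hd c (\<not>t)] @ (Bar # fc c Y))" using EQ_wf[OF e1 w] .
  have e2: "EQ f1 f3 (fc c X @ [Hd a s, Bar, Hd c (\<not>t)] @ (Bar # fc c Y)) (fc c X @ [Hd c (\<not>t), Bar, Hd a s] @ (Bar # fc c Y))"
    using F3d[OF wD1 ac] .
  have wS: "wf_gauss (fc c X @ [Hd c (\<not>t), Bar, Hd a s] @ (Bar # fc c Y))" using EQ_wf[OF e2 wD1] .
  have e3: "EQ f1 f3 (fc c X @ [Hd c (\<not>t), Bar, Hd a s] @ (Bar # fc c Y)) (fc c X @ [Bar, Bar, Hd c (\<not>t), Bar, Hd a s, Bar] @ fc c Y)"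
    using T2ins[of "fc c X" "[Hd c (\<not>t), Bar, Hd a s] @ (Bar # fc c Y)" f1 f3] wS by simp
  have e4: "EQ f1 f3 (fc c X @ [Bar, Bar, Hd c (\<not>t), Bar, Hd a s, Bar] @ fc c Y) (X @ [Bar, Tl c t, Hd a s, Bar] @ Y)"
    using EQ_fc_both[OF w2, of c f1 f3] D2 by simp
  show ?thesis using e1 e2 e3 e4 by (meson rtranclp_trans)
qed

lemma HBTd:
  assumes w: "wf_gauss (X @ [Hd a s, Bar, Tl c t] @ Y)" and ac: "a \<noteq> c"
  shows "EQ f1 f3 (X @ [Hd a s, Bar, Tl c t] @ Y) (X @ [Bar, Tl c t, Bar, Hd a s, Bar] @ Y)"
proof -
  have w2: "wf_gauss (X @ [Bar, Tl c t, Bar, Hd a s, Bar] @ Y)" by (rule wf_nb[OF _ w]) simp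
  have D1: "fc c (X @ [Hd a s, Bar, Tl c t] @ Y) = fc c X @ [Hd a s, Bar, Bar, Hd c (\<not>t), Bar] @ fc c Y"
    using ac by simp
  have D2: "fc c (X @ [Bar, Tl c t, Bar, Hd a s, Bar] @ Y) = fc c X @ [Bar, Bar, Hd c (\<not>t), Bar, Bar, Hd a s, Bar] @ fc c Y"
    using ac by simp
  have e1: "EQ f1 f3 (X @ [Hd a s, Bar, Tl c t] @ Y) (fc c X @ [Hd a s, Bar, Bar, Hd c (\<not>t), Bar] @ fc c Y)"
    using EQ_fc_both[OF w, of c f1 f3] D1 by simp
  have wD1: "wf_gauss (fc c X @ [Hd a s, Bar, Bar, Hd c (\<not>t), Bar] @ fc c Y)" using EQ_wf[OF e1 w] .
  have wS1: "wf_gauss (fc c X @ [Hd a s, Hd c (\<not>t)] @ (Bar # fc c Y))" by (rule wf_nb[OF _ wD1]) simp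
  have e2: "EQ f1 f3 (fc c X @ [Hd a s, Bar, Bar, Hd c (\<not>t), Bar] @ fc c Y) (fc c X @ [Hd a s, Hd c (\<not>t)] @ (Bar # fc c Y))"
    using T2ins[of "fc c X @ [Hd a s]" "[Hd c (\<not>t), Bar] @ fc c Y" f1 f3] wS1 by simp
  have e3: "EQ f1 f3 (fc c X @ [Hd a s, Hd c (\<not>t)] @ (Bar # fc c Y)) (fc c X @ [Hd c (\<not>t), Hd a s] @ (Bar # fc c Y))"
    using F1d[OF wS1 ac] .
  have wS2: "wf_gauss (fc c X @ [Hd c (\<not>t), Hd a s] @ (Bar # fc c Y))" using EQ_wf[OF e3 wS1] .
  have e4: "EQ f1 f3 (fc c X @ [Hd c (\<not>t), Hd a s] @ (Bar # fc c Y)) (fc c X @ [Bar, Bar, Hd c (\<not>t), Hd a s, Bar] @ fc c Y)"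
    using T2ins[of "fc c X" "[Hd c (\<not>t), Hd a s] @ (Bar # fc c Y)" f1 f3] wS2 by simp
  have wS3: "wf_gauss (fc c X @ [Bar, Bar, Hd c (\<not>t), Hd a s, Bar] @ fc c Y)" using EQ_wf[OF e4 wS2] .
  have e5: "EQ f1 f3 (fc c X @ [Bar, Bar, Hd c (\<not>t), Hd a s, Bar] @ fc c Y) (fc c X @ [Bar, Bar, Hd c (\<not>t), Bar, Bar, Hd a s, Bar] @ fc c Y)"
    using T2ins[of "fc c X @ [Bar, Bar, Hd c (\<not>t)]" "[Hd a s, Bar] @ fc c Y" f1 f3] wS3 by simp
  have e6: "EQ f1 f3 (fc c X @ [Bar, Bar, Hd c (\<not>t), Bar, Bar, Hd a s, Bar] @ fc c Y) (X @ [Bar, Tl c t, Bar, Hd a s, Bar] @ Y)"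
    using EQ_fc_both[OF w2, of c f1 f3] D2 by simp
  show ?thesis using e1 e2 e3 e4 e5 e6 by (meson rtranclp_trans)
qed

lemma inner:
  "length Y + nb Y = n \<Longrightarrow> wf_gauss (X @ [Hd a s] @ Y @ [Tl a s] @ Z) \<Longrightarrow>
   \<exists>D'. EQ f1 f3 (X @ [Hd a s] @ Y @ [Tl a s] @ Z) D' \<and> nb D' < nb (X @ [Hd a s] @ Y @ [Tl a s] @ Z)"
proof (induction n arbitrary: X Y rule: less_induct)
  case (less n)
  define D where "D = X @ [Hd a s] @ Y @ [Tl a s] @ Z"
  have w: "wf_gauss D" using less.prems(2) D_def by simp
  have "length (filter (\<lambda>m. lab m = Some a) D) \<le> 2" using wf_len[OF w] .
  then have fX: "filter (\<lambda>m. lab m = Some a) X = []" and fY: "filter (\<lambda>m. lab m = Some a) Y = []"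
    and fZ: "filter (\<lambda>m. lab m = Some a) Z = []" by (auto simp: D_def)
  have rem: "filter (\<lambda>m. lab m \<noteq> Some a) X = X" "filter (\<lambda>m. lab m \<noteq> Some a) Z = Z"
    using fX fZ by (auto simp: filter_empty_conv filter_id_conv)
  have ce: "chord_ends a s (Hd a s) (Tl a s)" by (simp add: chord_ends_def)
  have cont: "\<exists>D'. EQ f1 f3 D D' \<and> nb D' < nb D"
    if e: "EQ f1 f3 D (X2 @ [Hd a s] @ Y2 @ [Tl a s] @ Z)" and m: "length Y2 + nb Y2 < n"
     and nbe: "nb (X2 @ [Hd a s] @ Y2 @ [Tl a s] @ Z) = nb D" for X2 Y2
  proof -
    have w2: "wf_gauss (X2 @ [Hd a s] @ Y2 @ [Tl a s] @ Z)" using EQ_wf[OF e w] .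
    obtain D' where "EQ f1 f3 (X2 @ [Hd a s] @ Y2 @ [Tl a s] @ Z) D'" "nb D' < nb (X2 @ [Hd a s] @ Y2 @ [Tl a s] @ Z)"
      using less.IH[OF m refl w2] by blast
    then show ?thesis using e nbe by (metis rtranclp_trans)
  qed
  have goal: "\<exists>D'. EQ f1 f3 D D' \<and> nb D' < nb D"
  proof (cases Y)
    case Nil
    have wr: "wf_gauss (X @ Z)" using wf_rem[OF w, of a] rem by (simp add: D_def Nil)
    have "EQ f1 f3 D (X @ Z)"
      using gstep_sym_basic[OF basic_move.R1[OF ce, of f1 f3 X Z] wr] w by (simp add: D_def Nil)
    moreover have "nb (X @ Z) < nb D" by (simp add: D_def Nil nb_def)
    ultimately show ?thesis by blast
  next
    case (Cons y Y1)
    show ?thesis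
    proof (cases y)
      case (Hd b t)
      have ab: "a \<noteq> b" using fY Cons Hd by auto
      have e: "EQ f1 f3 D ((X @ [Hd b t]) @ [Hd a s] @ Y1 @ [Tl a s] @ Z)"
        using F1d[of X a s b t "Y1 @ [Tl a s] @ Z" f1 f3] w ab by (simp add: D_def Cons Hd)
      show ?thesis by (rule cont[OF e]) (auto simp: less.prems(1)[symmetric] Cons Hd nb_def D_def)
    next
      case (Tl c t)
      have ac: "a \<noteq> c" using fY Cons Tl by auto
      have e: "EQ f1 f3 D ((X @ [Bar, Tl c t]) @ [Hd a s] @ (Bar # Y1) @ [Tl a s] @ Z)"
        using HTd[of X a s c t "Y1 @ [Tl a s] @ Z" f1 f3] w ac by (simp add: D_def Cons Tl)
      show ?thesis by (rule cont[OF e]) (auto simp: less.prems(1)[symmetric] Cons Tl nb_def D_def)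
    next
      case Bar
      show ?thesis
      proof (cases Y1)
        case Nil
        have wr: "wf_gauss (X @ [Bar] @ Z)" using wf_rem[OF w, of a] rem by (simp add: D_def Cons Bar Nil)
        have "EQ f1 f3 D (X @ [Bar] @ Z)"
          using gstep_sym_basic[OF basic_move.T4[OF ce, of f1 f3 X Z] wr] w by (simp add: D_def Cons Bar Nil)
        moreover have "nb (X @ [Bar] @ Z) < nb D" by (simp add: D_def Cons Bar Nil nb_def)
        ultimately show ?thesis by blast
      next
        case (Cons z Y3)
        note C1 = \<open>Y = y # Y1\<close>
        show ?thesis
        proof (cases z)
          case Bar
          have wr: "wf_gauss ((X @ [Hd a s]) @ (Y3 @ [Tl a s] @ Z))" by (rule wf_nb[OF _ w]) (simp add: D_def C1 Cons Bar \<open>y = Bar\<close>)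
          have e: "EQ f1 f3 D (X @ [Hd a s] @ Y3 @ [Tl a s] @ Z)"
            using T2ins[OF wr, of f1 f3] by (simp add: D_def C1 Cons Bar \<open>y = Bar\<close>)
          show ?thesis by (rule cont[OF e]) (auto simp: less.prems(1)[symmetric] C1 Cons Bar \<open>y = Bar\<close> nb_def D_def)
        next
          case (Hd b t)
          have ab: "a \<noteq> b" using fY C1 Cons Hd \<open>y = Bar\<close> by auto
          have e: "EQ f1 f3 D ((X @ [Hd b t, Bar]) @ [Hd a s] @ Y3 @ [Tl a s] @ Z)"
            using F3d[of X a s b t "Y3 @ [Tl a s] @ Z" f1 f3] w ab by (simp add: D_def C1 Cons Hd \<open>y = Bar\<close>)
          show ?thesis by (rule cont[OF e]) (auto simp: less.prems(1)[symmetric] C1 Cons Hd \<open>y = Bar\<close> nb_def D_def)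
        next
          case (Tl c t)
          have ac: "a \<noteq> c" using fY C1 Cons Tl \<open>y = Bar\<close> by auto
          have e: "EQ f1 f3 D ((X @ [Bar, Tl c t, Bar]) @ [Hd a s] @ (Bar # Y3) @ [Tl a s] @ Z)"
            using HBTd[of X a s c t "Y3 @ [Tl a s] @ Z" f1 f3] w ac by (simp add: D_def C1 Cons Tl \<open>y = Bar\<close>)
          show ?thesis by (rule cont[OF e]) (auto simp: less.prems(1)[symmetric] C1 Cons Tl \<open>y = Bar\<close> nb_def D_def)
        qed
      qed
    qed
  qed
  then show ?case by (simp add: D_def)
qed

lemma reduce: "nb D = n \<Longrightarrow> wf_gauss D \<Longrightarrow> \<exists>k. EQ f1 f3 D (replicate k Bar)"
proof (induction n arbitrary: D rule: less_induct)
  case (less n)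
  note w = less.prems(2)
  show ?case
  proof (cases "\<forall>m\<in>set D. m = Bar")
    case True
    then have r: "replicate (length D) Bar = D" by (simp add: replicate_length_same)
    show ?thesis by (rule exI[of _ "length D"]) (simp only: r rtranclp.rtrancl_refl)
  next
    case False
    then obtain m where mD: "m \<in> set D" and mB: "m \<noteq> Bar" by blast
    from mB obtain a where la: "lab m = Some a" by (cases m) auto
    have ne: "filter (\<lambda>m. lab m = Some a) D \<noteq> []" using mD la by (auto simp: filter_empty_conv)
    obtain s u v X Y Z where cu: "chord_ends a s u v" and D: "D = X @ [u] @ Y @ [v] @ Z"
      and "filter (\<lambda>m. lab m = Some a) X = []" "filter (\<lambda>m. lab m = Some a) Y = []"
      "filter (\<lambda>m. lab m = Some a) Z = []"
      by (rule wf_split[OF w ne])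
    have "\<exists>D'. EQ f1 f3 D D' \<and> nb D' < nb D"
    proof (cases "u = Hd a s")
      case True
      then have "v = Tl a s" using cu by (auto simp: chord_ends_def)
      then have w': "wf_gauss (X @ [Hd a s] @ Y @ [Tl a s] @ Z)" using w by (simp only: D True \<open>v = Tl a s\<close>)
      obtain D' where "EQ f1 f3 (X @ [Hd a s] @ Y @ [Tl a s] @ Z) D'" "nb D' < nb (X @ [Hd a s] @ Y @ [Tl a s] @ Z)"
        using inner[OF refl w'] by blast
      then show ?thesis using D True \<open>v = Tl a s\<close> by auto
    next
      case False
      then have uv: "u = Tl a s" "v = Hd a s" using cu by (auto simp: chord_ends_def)
      have r: "rotate (length (X @ [u] @ Y)) D = [] @ [Hd a s] @ (Z @ X) @ [Tl a s] @ Y"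
      proof -
        have "rotate (length (X @ [u] @ Y)) ((X @ [u] @ Y) @ ([v] @ Z)) = ([v] @ Z) @ (X @ [u] @ Y)"
          by (rule rotate_append)
        then show ?thesis using D uv by simp
      qed
      have e: "EQ f1 f3 D ([] @ [Hd a s] @ (Z @ X) @ [Tl a s] @ Y)" using EQ_rot[OF w, of f1 f3 "length (X @ [u] @ Y)"] r by simp
      have w2: "wf_gauss ([] @ [Hd a s] @ (Z @ X) @ [Tl a s] @ Y)" using EQ_wf[OF e w] .
      obtain D' where "EQ f1 f3 ([] @ [Hd a s] @ (Z @ X) @ [Tl a s] @ Y) D'" "nb D' < nb ([] @ [Hd a s] @ (Z @ X) @ [Tl a s] @ Y)"
        using inner[OF refl w2] by blast
      moreover have "nb ([] @ [Hd a s] @ (Z @ X) @ [Tl a s] @ Y) = nb D" using D uv by (simp add: nb_def)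
      ultimately show ?thesis using e by (metis rtranclp_trans)
    qed
    then obtain D' where e: "EQ f1 f3 D D'" and lt: "nb D' < nb D" by blast
    obtain k where "EQ f1 f3 D' (replicate k Bar)"
      using less.IH[OF _ refl EQ_wf[OF e w]] lt less.prems(1) by blast
    then show ?thesis using e by (metis rtranclp_trans)
  qed
qed

lemma wf_rep: "wf_gauss (replicate k Bar)" by (simp add: wf_gauss_def)

lemma bars: "EQ f1 f3 (replicate k Bar) [] \<or> EQ f1 f3 (replicate k Bar) [Bar]"
proof (induction k rule: less_induct)
  case (less k)
  show ?case
  proof (cases k)
    case 0 then show ?thesis by simp
  next
    case (Suc j)
    show ?thesis
    proof (cases j)
      case 0 then show ?thesis using Suc by simp
    next
      case (Suc i)
      have "EQ f1 f3 (replicate k Bar) (replicate i Bar)"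
        using T2ins[of "[]" "replicate i Bar" f1 f3] wf_rep[of i] \<open>k = Suc j\<close> Suc by simp
      moreover have "EQ f1 f3 (replicate i Bar) [] \<or> EQ f1 f3 (replicate i Bar) [Bar]"
        using less.IH[of i] \<open>k = Suc j\<close> Suc by simp
      ultimately show ?thesis by (meson rtranclp_trans)
    qed
  qed
qed

theorem mainTheorem1:
  fixes f1 f3 :: bool and D :: "mark list"
  assumes "wf_gauss D"
  shows "(gstep f1 f3)\<^sup>*\<^sup>* D [] \<or> (gstep f1 f3)\<^sup>*\<^sup>* D [Bar]"
proof -
  obtain k where "EQ f1 f3 D (replicate k Bar)" using reduce[OF refl assms] by blast
  then show ?thesis using bars[of f1 f3 k] by (meson rtranclp_trans)
qed

end
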